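(* Let $k \geq 3$ be an odd integer. Then $h(n,k) \leq \frac{n(3k-1)}{12}$ for every positive integer $n$ with $n \equiv 0 \pmod{\frac{3(k-1)}{2}}$.
   Context: All graphs are finite and simple. A degree monotone path in a graph $G$ is a path $v_1v_2\ldots v_m$ such that $\deg(v_1)\le \cdots\le \deg(v_m)$ or $\deg(v_1)\ge \cdots\ge \deg(v_m)$; its length is its number of vertices. $mp(G)$ denotes the maximum length of a degree monotone path in $G$. For a pair $e$ of non-adjacent vertices, $G+e$ is $G$ with the edge $e$ added. A graph $G$ is $k$-saturated if $mp(G)\le k-1$ and $mp(G+e)\ge k$ for every pair $e$ of non-adjacent vertices of $G$ (so $K_m$ is $k$-saturated for $m\le k-1$). $h(n,k)$ is the minimum number of edges of a $k$-saturated graph on $n$ vertices. *)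

theory Defs
  imports Main
begin

definition simple_graph :: "nat \<Rightarrow> nat set set \<Rightarrow> bool" where
  "simple_graph n E \<longleftrightarrow> (\<forall>e\<in>E. e \<subseteq> {0..<n} \<and> card e = 2)"

definition deg :: "nat set set \<Rightarrow> nat \<Rightarrow> nat" where
  "deg E v = card {u. {u, v} \<in> E}"

text \<open>A path: a nonempty list of distinct vertices, consecutive ones adjacent.
  Its length is its number of vertices.\<close>
definition is_path :: "nat \<Rightarrow> nat set set \<Rightarrow> nat list \<Rightarrow> bool" where
  "is_path n E p \<longleftrightarrow> p \<noteq> [] \<and> distinct p \<and> set p \<subseteq> {0..<n} \<and>
     (\<forall>i. Suc i < length p \<longrightarrow> {p ! i, p ! Suc i} \<in> E)"

definition degree_monotone_path :: "nat \<Rightarrow> nat set set \<Rightarrow> nat list \<Rightarrow> bool" where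
  "degree_monotone_path n E p \<longleftrightarrow> is_path n E p \<and>
     ((\<forall>i. Suc i < length p \<longrightarrow> deg E (p ! i) \<le> deg E (p ! Suc i)) \<or>
      (\<forall>i. Suc i < length p \<longrightarrow> deg E (p ! i) \<ge> deg E (p ! Suc i)))"

definition mp :: "nat \<Rightarrow> nat set set \<Rightarrow> nat" where
  "mp n E = Max {length p | p. degree_monotone_path n E p}"

definition k_saturated :: "nat \<Rightarrow> nat \<Rightarrow> nat set set \<Rightarrow> bool" where
  "k_saturated k n E \<longleftrightarrow> simple_graph n E \<and> mp n E \<le> k - 1 \<and>
     (\<forall>u\<in>{0..<n}. \<forall>v\<in>{0..<n}. u \<noteq> v \<longrightarrow> {u, v} \<notin> E \<longrightarrow> mp n (insert {u, v} E) \<ge> k)"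

definition h :: "nat \<Rightarrow> nat \<Rightarrow> nat" where
  "h n k = Min {card E | E. k_saturated k n E}"

end

theory Submission
  imports Defs
begin

lemma divmod3: "(s::nat) < 3 \<Longrightarrow> (3*q + s) div 3 = q \<and> (3*q + s) mod 3 = s"
  by simp
lemma dec3: "(b::nat) = 3*(b div 3) + b mod 3" by simp
lemma lt3: "(r::nat) < 3 \<Longrightarrow> r = 0 \<or> r = 1 \<or> r = 2" by auto
lemma div3_lt: "(c::nat) div 3 = b div 3 \<Longrightarrow> b < 3*m \<Longrightarrow> c < 3*m"
  by (metis div_less_iff_less_mult mult.commute zero_less_numeral)


lemma succ_path: "is_path n E p \<longleftrightarrow> p \<noteq> [] \<and> distinct p \<and> set p \<subseteq> {0..<n} \<and> successively (\<lambda>a b. {a,b} \<in> E) p"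
  unfolding is_path_def successively_conv_nth by blast

lemma sorted_ge_mono: "sorted_wrt (\<lambda>a b. f a \<ge> (f b::nat)) p \<Longrightarrow> (\<forall>i. Suc i < length p \<longrightarrow> f (p ! i) \<ge> f (p ! Suc i))"
  by (metis Suc_lessD lessI sorted_wrt_nth_less)

lemma dmp_intro:
  assumes "p \<noteq> []" "distinct p" "set p \<subseteq> {0..<n}" "successively (\<lambda>a b. {a,b} \<in> E) p"
    "sorted_wrt (\<lambda>a b. deg E a \<ge> deg E b) p"
  shows "degree_monotone_path n E p"
  unfolding degree_monotone_path_def succ_path using assms sorted_ge_mono[OF assms(5)] by blast

lemma dmp_len: "degree_monotone_path n E p \<Longrightarrow> length p \<le> n"
  unfolding degree_monotone_path_def is_path_def
  by (metis card_atLeastLessThan card_mono distinct_card finite_atLeastLessThan minus_nat.diff_0)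

lemma mp_ge: assumes "degree_monotone_path n E p" shows "length p \<le> mp n E"
proof -
  have "{length p | p. degree_monotone_path n E p} \<subseteq> {0..n}" using dmp_len by auto
  hence "finite {length p | p. degree_monotone_path n E p}" using finite_subset by blast
  thus ?thesis unfolding mp_def using assms by (intro Max_ge) auto
qed

lemma mp_le: assumes "n > 0" "\<And>p. degree_monotone_path n E p \<Longrightarrow> length p \<le> B" shows "mp n E \<le> B"
proof -
  have "{length p | p. degree_monotone_path n E p} \<subseteq> {0..n}" using dmp_len by auto
  hence fin: "finite {length p | p. degree_monotone_path n E p}" using finite_subset by blast
  have "degree_monotone_path n E [0]" unfolding degree_monotone_path_def is_path_def using assms(1) by auto
  hence ne: "{length p | p. degree_monotone_path n E p} \<noteq> {}" by blast
  show ?thesis unfolding mp_def using Max_le_iff[OF fin ne] assms(2) by blast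
qed

lemma chain_rel:
  assumes "transp R" "reflp R" "\<forall>i. Suc i < len \<longrightarrow> R (f i) (f (Suc i))" "i \<le> j" "j < len"
  shows "R (f i) (f j)"
  using assms(4,5)
proof (induction j)
  case 0 then show ?case using assms(2) by (simp add: reflpD)
next
  case (Suc j)
  show ?case
  proof (cases "i = Suc j")
    case True then show ?thesis using assms(2) by (simp add: reflpD)
  next
    case False
    then have "R (f i) (f j)" using Suc by simp
    moreover have "R (f j) (f (Suc j))" using assms(3) Suc by blast
    ultimately show ?thesis using assms(1) by (meson transpE)
  qed
qed

definition startl :: "nat set \<Rightarrow> nat \<Rightarrow> nat list" where
  "startl S x = x # sorted_list_of_set (S - {x})"
definition endl :: "nat set \<Rightarrow> nat \<Rightarrow> nat list" where
  "endl S x = sorted_list_of_set (S - {x}) @ [x]"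

lemma startl: assumes "finite S" "x \<in> S"
  shows "distinct (startl S x)" "set (startl S x) = S" "length (startl S x) = card S"
    "startl S x \<noteq> []" "last (startl S x) \<in> S"
proof -
  show "distinct (startl S x)" "set (startl S x) = S" using assms by (auto simp: startl_def)
  show "length (startl S x) = card S" using assms
    by (simp add: startl_def card_gt_0_iff) (metis card_gt_0_iff Suc_pred empty_iff)
  show "startl S x \<noteq> []" by (simp add: startl_def)
  then show "last (startl S x) \<in> S" using \<open>set (startl S x) = S\<close> last_in_set by blast
qed

lemma endl: assumes "finite S" "x \<in> S"
  shows "distinct (endl S x)" "set (endl S x) = S" "length (endl S x) = card S"
    "endl S x \<noteq> []" "last (endl S x) = x"
proof -
  show "distinct (endl S x)" "set (endl S x) = S" using assms by (auto simp: endl_def)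
  show "length (endl S x) = card S" using assms
    by (simp add: endl_def card_gt_0_iff) (metis card_gt_0_iff Suc_pred empty_iff)
  show "endl S x \<noteq> []" "last (endl S x) = x" by (simp_all add: endl_def)
qed

lemma sorted_const: "(\<forall>a\<in>set xs. f a = (c::nat)) \<Longrightarrow> sorted_wrt (\<lambda>a b. f a \<ge> f b) xs"
  by (induction xs) auto




locale C = fixes t m :: nat assumes tpos: "0 < t" and mpos: "0 < m"
begin

definition N where "N = 3*t*m"
definition isA where "isA v \<longleftrightarrow> v div t mod 3 = 0"
definition adj where "adj u v \<longleftrightarrow> u \<noteq> v \<and> (u div t = v div t \<or>
   (u div t div 3 = v div t div 3 \<and> u mod t = v mod t \<and> isA u \<noteq> isA v))"
definition E0 where "E0 = {{u,v} | u v. u < N \<and> v < N \<and> adj u v}"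
definition S where "S c = {t*c ..< t*c+t}"
definition pt where "pt c w = t*c + w mod t"
definition CC :: "nat \<Rightarrow> nat set" where "CC b = {c. c div 3 = b div 3 \<and> (c mod 3 = 0) \<noteq> (b mod 3 = 0)}"

lemma adj_sym: "adj u v \<longleftrightarrow> adj v u" unfolding adj_def by auto

lemma memE0: "{x,y} \<in> E0 \<longleftrightarrow> x < N \<and> y < N \<and> adj x y"
proof
  assume "{x,y} \<in> E0"
  then obtain u v where "{x,y} = {u,v}" "u < N" "v < N" "adj u v" unfolding E0_def by blast
  then show "x < N \<and> y < N \<and> adj x y" by (metis adj_sym doubleton_eq_iff)
qed (auto simp: E0_def)

lemma lessN: "x < N \<longleftrightarrow> x div t < 3*m"
  unfolding N_def using tpos
  by (metis div_less_iff_less_mult mult.assoc mult.commute)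

lemma S_iff: "x \<in> S c \<longleftrightarrow> x div t = c"
proof
  assume "x \<in> S c" then show "x div t = c" unfolding S_def by (intro div_nat_eqI) auto
next
  assume a: "x div t = c"
  have "x = t * (x div t) + x mod t" by simp
  moreover have "x mod t < t" using tpos by simp
  ultimately show "x \<in> S c" unfolding S_def a by (simp add: add.commute)
qed

lemma finS: "finite (S c)" by (simp add: S_def)
lemma cardS: "card (S c) = t" by (simp add: S_def)

lemma pt_div: "pt c w div t = c" unfolding pt_def using tpos by simp
lemma pt_mod: "pt c w mod t = w mod t" unfolding pt_def using tpos by simp

lemma eq_divmod: "x = y \<longleftrightarrow> x div t = y div t \<and> x mod t = y mod t"
  by (metis div_mult_mod_eq)

lemma CC_alt: "CC b = (\<lambda>s. 3*(b div 3) + s) ` {s. s < 3 \<and> (s = 0) \<noteq> (b mod 3 = 0)}"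
proof (rule set_eqI)
  fix c
  show "c \<in> CC b \<longleftrightarrow> c \<in> (\<lambda>s. 3*(b div 3) + s) ` {s. s < 3 \<and> (s = 0) \<noteq> (b mod 3 = 0)}"
  proof
    assume "c \<in> CC b"
    then have h: "c div 3 = b div 3" "(c mod 3 = 0) \<noteq> (b mod 3 = 0)" unfolding CC_def by auto
    have "c = 3*(b div 3) + c mod 3" using dec3[of c] h(1) by simp
    moreover have "c mod 3 \<in> {s. s < 3 \<and> (s = 0) \<noteq> (b mod 3 = 0)}" using h(2) by simp
    ultimately show "c \<in> (\<lambda>s. 3*(b div 3) + s) ` {s. s < 3 \<and> (s = 0) \<noteq> (b mod 3 = 0)}"
      by (rule image_eqI)
  next
    assume "c \<in> (\<lambda>s. 3*(b div 3) + s) ` {s. s < 3 \<and> (s = 0) \<noteq> (b mod 3 = 0)}"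
    then obtain s where s: "s < 3" "(s=0) \<noteq> (b mod 3 = 0)" "c = 3*(b div 3)+s" by auto
    then show "c \<in> CC b" unfolding CC_def using divmod3[OF s(1), of "b div 3"] by simp
  qed
qed

lemma finCC: "finite (CC b)" by (simp add: CC_alt)

lemma CC_card: "card (CC b) = (if b mod 3 = 0 then 2 else 1)"
proof -
  have i: "inj_on (\<lambda>s. 3*(b div 3) + s) X" for X by (simp add: inj_on_def)
  have e: "{s::nat. s < 3 \<and> (s = 0) \<noteq> Q} = (if Q then {1,2} else {0})" for Q
    using lt3 by auto
  show ?thesis unfolding CC_alt card_image[OF i] e by simp
qed

lemma cc_lt: "c \<in> CC b \<Longrightarrow> b < 3*m \<Longrightarrow> c < 3*m"
  unfolding CC_def using div3_lt by blast

lemma nbrs_iff: assumes "w < N"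
  shows "x < N \<and> adj x w \<longleftrightarrow> x \<in> (S (w div t) - {w}) \<union> (\<lambda>c. pt c w) ` CC (w div t)"
proof
  assume a: "x < N \<and> adj x w"
  show "x \<in> (S (w div t) - {w}) \<union> (\<lambda>c. pt c w) ` CC (w div t)"
  proof (cases "x div t = w div t")
    case True
    moreover have "x \<noteq> w" using a unfolding adj_def by blast
    ultimately have "x \<in> S (w div t) - {w}" by (simp add: S_iff)
    then show ?thesis by blast
  next
    case False
    then have h: "x div t div 3 = w div t div 3" "x mod t = w mod t" "isA x \<noteq> isA w"
      using a unfolding adj_def by blast+
    then have "x div t \<in> CC (w div t)" unfolding CC_def isA_def by simp
    moreover have "x = pt (x div t) w" using h(2) eq_divmod pt_div pt_mod by metis
    ultimately show ?thesis by blast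
  qed
next
  assume a: "x \<in> (S (w div t) - {w}) \<union> (\<lambda>c. pt c w) ` CC (w div t)"
  show "x < N \<and> adj x w"
  proof (cases "x \<in> S (w div t) - {w}")
    case True
    then have "x div t = w div t" "x \<noteq> w" by (simp_all add: S_iff)
    then show ?thesis using assms unfolding adj_def lessN by simp
  next
    case False
    then obtain c where c: "c \<in> CC (w div t)" "x = pt c w" using a by blast
    have xd: "x div t = c" "x mod t = w mod t" using c(2) pt_div pt_mod by simp_all
    have cn: "c \<noteq> w div t" using c(1) unfolding CC_def by auto
    have "x \<noteq> w" using xd cn by metis
    moreover have "c div 3 = w div t div 3" "(c mod 3 = 0) \<noteq> (w div t mod 3 = 0)" using c(1) unfolding CC_def by simp_all
    moreover have "c < 3*m" using cc_lt[OF c(1)] assms unfolding lessN by blast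
    ultimately show ?thesis unfolding adj_def lessN isA_def xd by blast
  qed
qed

lemma nbrs: assumes "w < N"
  shows "{x. {x,w} \<in> E0} = (S (w div t) - {w}) \<union> (\<lambda>c. pt c w) ` CC (w div t)"
proof -
  have "{x. {x,w} \<in> E0} = {x. x < N \<and> adj x w}" unfolding memE0 using assms by blast
  then show ?thesis using nbrs_iff[OF assms] by blast
qed

lemma deg0: assumes "w < N" shows "deg E0 w = t + (if isA w then 1 else 0)"
proof -
  have d: "(S (w div t) - {w}) \<inter> (\<lambda>c. pt c w) ` CC (w div t) = {}"
    by (auto simp: S_iff pt_div CC_def)
  have i: "inj_on (\<lambda>c. pt c w) (CC (w div t))" by (metis inj_onI pt_div)
  have "w \<in> S (w div t)" by (simp add: S_iff)
  then have c1: "card (S (w div t) - {w}) = t - 1" by (simp add: cardS finS)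
  have "deg E0 w = card (S (w div t) - {w}) + card (CC (w div t))"
    unfolding deg_def nbrs[OF assms] using d i
    by (subst card_Un_disjoint) (auto simp: finS card_image finCC)
  then show ?thesis using c1 tpos by (simp add: CC_card isA_def)
qed

end



context C begin

lemma deg_set: "set p \<subseteq> {0..<N} \<Longrightarrow> x \<in> set p \<Longrightarrow> deg E0 x = t + (if isA x then 1 else 0)"
  using deg0 by auto

lemma path_bound: assumes dp: "degree_monotone_path N E0 p" shows "length p \<le> 2*t"
proof -
  let ?d = "deg E0"
  have ip: "is_path N E0 p" using dp unfolding degree_monotone_path_def by blast
  then have dist: "distinct p" and sub: "set p \<subseteq> {0..<N}"
    and ed: "\<And>i. Suc i < length p \<Longrightarrow> {p!i, p!Suc i} \<in> E0" unfolding is_path_def by blast+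
  have adjc: "Suc i < length p \<Longrightarrow> adj (p!i) (p!Suc i)" for i using ed memE0 by blast
  have dl: "l < length p \<Longrightarrow> ?d (p!l) = t + (if isA (p!l) then 1 else 0)" for l
    using deg_set[OF sub] nth_mem by blast
  have sand: "?d (p!l) = ?d (p!i)" if "i \<le> l" "l \<le> j" "j < length p" "?d (p!i) = ?d (p!j)" for i l j
  proof -
    have mono: "(\<forall>i. Suc i < length p \<longrightarrow> ?d (p ! i) \<le> ?d (p ! Suc i)) \<or>
      (\<forall>i. Suc i < length p \<longrightarrow> ?d (p ! i) \<ge> ?d (p ! Suc i))"
      using dp unfolding degree_monotone_path_def by blast
    then show ?thesis
    proof
      assume h: "\<forall>i. Suc i < length p \<longrightarrow> ?d (p ! i) \<le> ?d (p ! Suc i)"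
      have "?d (p!i) \<le> ?d (p!l)"
        using that(1-3) chain_rel[where R="(\<le>)" and f="\<lambda>i. ?d (p!i)", OF _ _ h, of i l]
        by (simp add: transp_def reflp_def)
      moreover have "?d (p!l) \<le> ?d (p!j)"
        using that(1-3) chain_rel[where R="(\<le>)" and f="\<lambda>i. ?d (p!i)", OF _ _ h, of l j]
        by (simp add: transp_def reflp_def)
      ultimately show ?thesis using that by linarith
    next
      assume h: "\<forall>i. Suc i < length p \<longrightarrow> ?d (p ! i) \<ge> ?d (p ! Suc i)"
      have "?d (p!i) \<ge> ?d (p!l)"
        using that(1-3) chain_rel[where R="(\<ge>)" and f="\<lambda>i. ?d (p!i)", OF _ _ h, of i l]
        by (simp add: transp_def reflp_def)
      moreover have "?d (p!l) \<ge> ?d (p!j)"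
        using that(1-3) chain_rel[where R="(\<ge>)" and f="\<lambda>i. ?d (p!i)", OF _ _ h, of l j]
        by (simp add: transp_def reflp_def)
      ultimately show ?thesis using that by linarith
    qed
  qed
  have sandA: "isA (p!l) = isA (p!i)" if "i \<le> l" "l \<le> j" "j < length p" "isA (p!i) = isA (p!j)" for i l j
  proof -
    have "?d (p!i) = ?d (p!j)" using dl that by simp
    then have "?d (p!l) = ?d (p!i)" using sand that by blast
    then show ?thesis using dl that by (simp split: if_splits)
  qed
  have blk: "p!j div t = p!i div t" if "i \<le> j" "j < length p" "isA (p!i) = isA (p!j)" for i j
  proof -
    have "p!l div t = p!i div t" if "l \<le> j" "i \<le> l" for l
      using that(2,1)
    proof (induction l rule: dec_induct)
      case base then show ?case by simp
    next
      case (step n)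
      have sj: "Suc n \<le> j" using step by auto
      have "isA (p!n) = isA (p!i)" "isA (p!Suc n) = isA (p!i)"
        using sandA[of i n j] sandA[of i "Suc n" j] \<open>j < length p\<close> \<open>isA (p!i) = isA (p!j)\<close> step(1) sj by auto
      moreover have "adj (p!n) (p!Suc n)" using adjc sj \<open>j < length p\<close> by simp
      ultimately have "p!Suc n div t = p!n div t" unfolding adj_def by auto
      then show ?case using step by simp
    qed
    then show ?thesis using that by blast
  qed
  have cls: "card {x\<in>set p. isA x = c} \<le> t" for c
  proof (cases "{x\<in>set p. isA x = c} = {}")
    case True then show ?thesis by (metis card.empty le0)
  next
    case False
    then obtain i where i: "i < length p" "isA (p!i) = c" by (auto simp: in_set_conv_nth)
    have "{x\<in>set p. isA x = c} \<subseteq> S (p!i div t)"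
    proof
      fix x assume "x \<in> {x\<in>set p. isA x = c}"
      then obtain j where j: "j < length p" "p!j = x" "isA x = c" by (auto simp: in_set_conv_nth)
      have "p!j div t = p!i div t"
      proof (cases "i \<le> j")
        case True then show ?thesis using blk[of i j] j i by simp
      next
        case False then show ?thesis using blk[of j i] j i by simp
      qed
      then show "x \<in> S (p!i div t)" using j by (simp add: S_iff)
    qed
    then show ?thesis using card_mono[OF finS] cardS by metis
  qed
  have "set p = {x\<in>set p. isA x = True} \<union> {x\<in>set p. isA x = False}" by auto
  then have "card (set p) \<le> card {x\<in>set p. isA x = True} + card {x\<in>set p. isA x = False}"
    by (metis card_Un_le)
  then have "card (set p) \<le> 2*t" using cls[of True] cls[of False] by linarith
  then show ?thesis using distinct_card[OF dist] by simp
qed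

lemma Npos: "0 < N" unfolding N_def using tpos mpos by simp

lemma mp0: "mp N E0 \<le> 2*t"
  using mp_le[OF Npos] path_bound by blast

lemma simple: "simple_graph N E0"
  unfolding simple_graph_def
proof
  fix e assume "e \<in> E0"
  then obtain u v where "e = {u,v}" "u < N" "v < N" "adj u v" unfolding E0_def by blast
  then show "e \<subseteq> {0..<N} \<and> card e = 2" unfolding adj_def by auto
qed

end



lemma sorted_startl:
  assumes "finite S" "\<forall>y\<in>S-{x}. f y = (c::nat)" "f x \<ge> c"
  shows "sorted_wrt (\<lambda>a b. f a \<ge> f b) (startl S x)"
  using assms sorted_const[of "sorted_list_of_set (S - {x})" f c] by (auto simp: startl_def)

context C begin

lemma S_sub: "c < 3*m \<Longrightarrow> S c \<subseteq> {0..<N}"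
  using lessN S_iff by auto

lemma isA_S: "x \<in> S c \<Longrightarrow> isA x \<longleftrightarrow> c mod 3 = 0"
  by (simp add: S_iff isA_def)

lemma pt_adj: assumes "w < N" "c div 3 = w div t div 3" "(c mod 3 = 0) \<noteq> isA w"
  shows "adj w (pt c w)" "pt c w < N" "pt c w \<in> S c"
proof -
  have "c \<noteq> w div t" using assms(3) unfolding isA_def by auto
  then have ne: "w \<noteq> pt c w" using pt_div by metis
  have "isA (pt c w) \<longleftrightarrow> c mod 3 = 0" by (simp add: isA_def pt_div)
  then show "adj w (pt c w)" unfolding adj_def using ne assms pt_div pt_mod by auto
  have "w div t < 3*m" using assms(1) lessN by blast
  then have "c < 3*m" using div3_lt[OF assms(2)] by blast
  then show "pt c w < N" using lessN pt_div by simp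
  show "pt c w \<in> S c" by (simp add: S_iff pt_div)
qed

end

locale D = C + fixes u v :: nat
  assumes uN: "u < N" and vN: "v < N" and uv: "u \<noteq> v" and nadj: "\<not> adj u v"
begin

definition E1 where "E1 = insert {u,v} E0"

lemma uvE1: "{u,v} \<in> E1" "{v,u} \<in> E1" unfolding E1_def by (auto simp: insert_commute)

lemma adjE1: "x < N \<Longrightarrow> y < N \<Longrightarrow> adj x y \<Longrightarrow> {x,y} \<in> E1"
  unfolding E1_def using memE0 by blast

lemma deg1: assumes "w < N" shows "deg E1 w = t + (if isA w then 1 else 0) + (if w = u \<or> w = v then 1 else 0)"
proof -
  have nE: "{u,v} \<notin> E0" using memE0 nadj by blast
  have sub: "{x. {x,w} \<in> E0} \<subseteq> {0..<N}" using memE0 by auto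
  have fin: "finite {x. {x,w} \<in> E0}" using finite_subset[OF sub] by simp
  have eq: "{x,w} = {u,v} \<longleftrightarrow> (x = u \<and> w = v) \<or> (x = v \<and> w = u)" for x
    by (simp add: doubleton_eq_iff)
  have "deg E1 w = deg E0 w + (if w = u \<or> w = v then 1 else 0)"
  proof (cases "w = u")
    case True
    then have "{x. {x,w} \<in> E1} = insert v {x. {x,w} \<in> E0}" unfolding E1_def using eq uv by auto
    moreover have "v \<notin> {x. {x,w} \<in> E0}" using nE True by (simp add: insert_commute)
    ultimately show ?thesis unfolding deg_def using fin True by simp
  next
    case F: False
    show ?thesis
    proof (cases "w = v")
      case True
      then have "{x. {x,w} \<in> E1} = insert u {x. {x,w} \<in> E0}" unfolding E1_def using eq uv by auto
      moreover have "u \<notin> {x. {x,w} \<in> E0}" using nE True by simp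
      ultimately show ?thesis unfolding deg_def using fin True by simp
    next
      case False
      then have "{x. {x,w} \<in> E1} = {x. {x,w} \<in> E0}" unfolding E1_def using eq F by auto
      then show ?thesis unfolding deg_def using F False by simp
    qed
  qed
  then show ?thesis using deg0[OF assms] by simp
qed

lemma clique: assumes "distinct xs" "set xs \<subseteq> S c" "c < 3*m"
  shows "successively (\<lambda>a b. {a,b} \<in> E1) xs"
  unfolding successively_conv_nth
proof (intro allI impI)
  fix i assume i: "Suc i < length xs"
  have ne: "xs!i \<noteq> xs!Suc i" using assms(1) i by (simp add: nth_eq_iff_index_eq)
  have m: "xs!i \<in> S c" "xs!Suc i \<in> S c" using assms(2) i nth_mem by (metis Suc_lessD subsetD)+
  then have "xs!i < N" "xs!Suc i < N" using S_sub[OF assms(3)] by auto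
  moreover have "adj (xs!i) (xs!Suc i)" using ne m unfolding adj_def by (simp add: S_iff)
  ultimately show "{xs!i, xs!Suc i} \<in> E1" using adjE1 by blast
qed

end



context D begin

lemma caseAA: assumes uA: "isA u" and vA: "isA v"
  shows "\<exists>p. degree_monotone_path N E1 p \<and> 2*t+1 \<le> length p"
proof -
  define bu where "bu = u div t"
  define bB where "bB = bu + 1"
  have bu: "bu < 3*m" "bu mod 3 = 0" using uN uA unfolding bu_def lessN isA_def by auto
  have "bu = 3*(bu div 3) + 0" using dec3[of bu] bu(2) by simp
  then have "bB = 3*(bu div 3) + 1" unfolding bB_def by simp
  then have bB23: "bB div 3 = bu div 3" "bB mod 3 = 1" using divmod3[of 1 "bu div 3"] by simp_all
  then have bB: "bB < 3*m" "bB div 3 = bu div 3" "bB mod 3 = 1" using div3_lt bu(1) by blast+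
  have ndiv: "v div t \<noteq> bu" using nadj uv unfolding adj_def bu_def by auto
  have uS: "u \<in> S bu" by (simp add: S_iff bu_def)
  define A where "A = startl (S bu) u"
  note Ap = startl[OF finS uS, folded A_def]
  have hdA: "hd A = u" unfolding A_def startl_def by simp
  define w where "w = last A"
  have wS: "w \<in> S bu" using Ap w_def by simp
  then have wN: "w < N" and wd: "w div t = bu" and wA: "isA w" using S_sub[OF bu(1)] S_iff isA_S bu by auto
  define y where "y = pt bB w"
  have py: "adj w y" "y < N" "y \<in> S bB" using pt_adj[OF wN] bB wd wA unfolding y_def by auto
  define B where "B = startl (S bB) y"
  note Bp = startl[OF finS py(3), folded B_def]
  have hdB: "hd B = y" unfolding B_def startl_def by simp
  have disj: "S bu \<inter> S bB = {}" using S_iff bB_def by auto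
  have vnot: "v \<notin> S bu" "v \<notin> S bB" using ndiv S_iff isA_S vA bB by auto
  let ?f = "deg E1"
  have fv: "?f v = t + 2" using deg1[OF vN] vA by simp
  have fu: "?f u = t + 2" using deg1[OF uN] uA by simp
  have fA: "\<forall>x\<in>S bu - {u}. ?f x = t + 1"
  proof
    fix x assume x: "x \<in> S bu - {u}"
    then have "x < N" "isA x" "x \<noteq> v" using S_sub[OF bu(1)] isA_S bu vnot by auto
    then show "?f x = t + 1" using deg1 x by simp
  qed
  have fB: "\<forall>x\<in>S bB. ?f x = t"
  proof
    fix x assume x: "x \<in> S bB"
    then have "x < N" "\<not> isA x" "x \<noteq> v" "x \<noteq> u" using S_sub[OF bB(1)] isA_S bB vnot uS disj by auto
    then show "?f x = t" using deg1 by simp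
  qed
  have fS: "\<forall>x\<in>S bu. ?f x \<ge> t + 1"
  proof
    fix x assume "x \<in> S bu" then show "?f x \<ge> t + 1" using fA fu by (cases "x = u") auto
  qed
  define p where "p = v # A @ B"
  have "degree_monotone_path N E1 p"
  proof (rule dmp_intro)
    show "p \<noteq> []" by (simp add: p_def)
    show "distinct p" using Ap Bp vnot disj by (simp add: p_def)
    show "set p \<subseteq> {0..<N}" using Ap Bp vN S_sub bu bB by (auto simp: p_def)
    have "successively (\<lambda>a b. {a,b} \<in> E1) A" using clique Ap bu by blast
    moreover have "successively (\<lambda>a b. {a,b} \<in> E1) B" using clique Bp bB by blast
    moreover have "{w, y} \<in> E1" using adjE1 wN py by blast
    ultimately have "successively (\<lambda>a b. {a,b} \<in> E1) (A @ B)"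
      using w_def hdB by (simp add: successively_append_iff)
    then show "successively (\<lambda>a b. {a,b} \<in> E1) p"
      using uvE1 hdA Ap by (simp add: p_def successively_Cons)
    have sA: "sorted_wrt (\<lambda>a b. ?f a \<ge> ?f b) A"
      unfolding A_def by (rule sorted_startl[where c="t+1"]) (use finS fA fu in auto)
    have sB: "sorted_wrt (\<lambda>a b. ?f a \<ge> ?f b) B"
      unfolding B_def by (rule sorted_startl[where c="t"]) (use finS fB py in auto)
    have "\<forall>a\<in>set A. \<forall>b\<in>set B. ?f a \<ge> ?f b" using Ap Bp fS fB by auto
    then have "sorted_wrt (\<lambda>a b. ?f a \<ge> ?f b) (A @ B)" using sA sB by (simp add: sorted_wrt_append)
    moreover have "\<forall>x\<in>set (A @ B). ?f v \<ge> ?f x"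
    proof
      fix x assume "x \<in> set (A @ B)"
      then have "x \<in> S bu - {u} \<or> x = u \<or> x \<in> S bB" using Ap Bp by auto
      then show "?f v \<ge> ?f x" using fA fB fu fv by auto
    qed
    ultimately show "sorted_wrt (\<lambda>a b. ?f a \<ge> ?f b) p" by (simp add: p_def)
  qed
  moreover have "length p = 2*t+1" using Ap Bp cardS by (simp add: p_def)
  ultimately show ?thesis by auto
qed

lemma caseAN: assumes uA: "isA u" and vA: "\<not> isA v"
  shows "\<exists>p. degree_monotone_path N E1 p \<and> 2*t+1 \<le> length p"
proof -
  define bv where "bv = v div t"
  define bA where "bA = bv - bv mod 3"
  define b' where "b' = (if bv mod 3 = 1 then bv + 1 else bv - 1)"
  have bv: "bv < 3*m" "bv mod 3 \<noteq> 0" using vN vA unfolding bv_def lessN isA_def by auto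
  have "bA = 3*(bv div 3) + 0" unfolding bA_def using dec3[of bv] by (metis add_diff_cancel_right' add_0_right)
  then have bA23: "bA div 3 = bv div 3" "bA mod 3 = 0" using divmod3[of 0 "bv div 3"] by simp_all
  then have bA: "bA < 3*m" "bA div 3 = bv div 3" "bA mod 3 = 0" using div3_lt bv(1) by blast+
  have "\<exists>s. s < 3 \<and> s \<noteq> 0 \<and> s \<noteq> bv mod 3 \<and> b' = 3*(bv div 3) + s"
  proof (cases "bv mod 3 = 1")
    case True
    then have "b' = 3*(bv div 3) + 2" unfolding b'_def using dec3[of bv] by simp
    then show ?thesis using True by (intro exI[of _ 2]) simp
  next
    case False
    then have "bv mod 3 = 2" using lt3[of "bv mod 3"] bv(2) by simp
    then have "b' = 3*(bv div 3) + 1" unfolding b'_def using dec3[of bv] False by simp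
    then show ?thesis using \<open>bv mod 3 = 2\<close> by (intro exI[of _ 1]) simp
  qed
  then obtain s where s: "s < 3" "s \<noteq> 0" "s \<noteq> bv mod 3" "b' = 3*(bv div 3) + s" by blast
  then have b'23: "b' div 3 = bv div 3" "b' mod 3 = s" using divmod3[of s "bv div 3"] by simp_all
  then have "b' \<noteq> bv" using s(3) by auto
  then have b': "b' < 3*m" "b' div 3 = bv div 3" "b' mod 3 \<noteq> 0" "b' \<noteq> bv"
    using div3_lt bv(1) b'23 s(2) by auto
  have bAb': "bA \<noteq> b'" using bA(3) b'(3) by auto
  define av where "av = pt bA v"
  have pav: "adj v av" "av < N" "av \<in> S bA" using pt_adj[OF vN] bA bv vA unfolding av_def bv_def by auto
  have avu: "av \<noteq> u" using pav(1) nadj adj_sym by metis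
  define X where "X = S bA - {u}"
  have finX: "finite X" using finS X_def by simp
  have avX: "av \<in> X" using pav avu X_def by simp
  define A where "A = startl X av"
  note Ap = startl[OF finX avX, folded A_def]
  have hdA: "hd A = av" unfolding A_def startl_def by simp
  define w where "w = last A"
  have wS: "w \<in> S bA" using Ap w_def X_def by auto
  then have wN: "w < N" and wd: "w div t = bA" and wA: "isA w" using S_sub[OF bA(1)] S_iff isA_S bA by auto
  define y where "y = pt b' w"
  have py: "adj w y" "y < N" "y \<in> S b'" using pt_adj[OF wN] b' bA wd wA unfolding y_def by auto
  define B where "B = startl (S b') y"
  note Bp = startl[OF finS py(3), folded B_def]
  have hdB: "hd B = y" unfolding B_def startl_def by simp
  have disj: "X \<inter> S b' = {}" using S_iff bAb' X_def by auto
  have vnot: "v \<notin> X" "v \<notin> S b'" using isA_S bA vA S_iff b' X_def unfolding bv_def by auto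
  have unot: "u \<notin> X" "u \<notin> S b'" using isA_S b' uA X_def by auto
  let ?f = "deg E1"
  have fv: "?f v = t + 1" using deg1[OF vN] vA by simp
  have fu: "?f u = t + 2" using deg1[OF uN] uA by simp
  have fA: "\<forall>x\<in>X. ?f x = t + 1"
  proof
    fix x assume x: "x \<in> X"
    then have "x < N" "isA x" "x \<noteq> v" "x \<noteq> u" using S_sub[OF bA(1)] isA_S bA vnot X_def by auto
    then show "?f x = t + 1" using deg1 by simp
  qed
  have fB: "\<forall>x\<in>S b'. ?f x = t"
  proof
    fix x assume x: "x \<in> S b'"
    then have "x < N" "\<not> isA x" "x \<noteq> v" "x \<noteq> u" using S_sub[OF b'(1)] isA_S b' vnot unot by auto
    then show "?f x = t" using deg1 by simp
  qed
  define p where "p = u # v # A @ B"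
  have "degree_monotone_path N E1 p"
  proof (rule dmp_intro)
    show "p \<noteq> []" by (simp add: p_def)
    show "distinct p" using Ap Bp vnot unot disj uv by (simp add: p_def)
    have "X \<subseteq> {0..<N}" using S_sub[OF bA(1)] X_def by auto
    then show "set p \<subseteq> {0..<N}" using Ap Bp uN vN S_sub[OF b'(1)] by (auto simp: p_def)
    have "successively (\<lambda>a b. {a,b} \<in> E1) A" using clique[of A bA] Ap bA X_def by auto
    moreover have "successively (\<lambda>a b. {a,b} \<in> E1) B" using clique Bp b' by blast
    moreover have "{w, y} \<in> E1" using adjE1 wN py by blast
    ultimately have "successively (\<lambda>a b. {a,b} \<in> E1) (A @ B)"
      using w_def hdB by (simp add: successively_append_iff)
    moreover have "{v, av} \<in> E1" using adjE1 vN pav by blast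
    ultimately show "successively (\<lambda>a b. {a,b} \<in> E1) p"
      using uvE1 hdA Ap by (simp add: p_def successively_Cons)
    have sA: "sorted_wrt (\<lambda>a b. ?f a \<ge> ?f b) A"
      unfolding A_def using finX fA avX by (intro sorted_startl[where c="t+1"]) auto
    have sB: "sorted_wrt (\<lambda>a b. ?f a \<ge> ?f b) B"
      unfolding B_def using fB py by (intro sorted_startl[where c="t"]) (auto simp: finS)
    have "\<forall>a\<in>set A. \<forall>b\<in>set B. ?f a \<ge> ?f b" using Ap Bp fA fB by auto
    then have "sorted_wrt (\<lambda>a b. ?f a \<ge> ?f b) (A @ B)" using sA sB by (simp add: sorted_wrt_append)
    moreover have "\<forall>x\<in>set (A @ B). ?f v \<ge> ?f x" using Ap Bp fA fB fv by auto
    moreover have "\<forall>x\<in>set (A @ B). ?f u \<ge> ?f x" using Ap Bp fA fB fu by auto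
    ultimately show "sorted_wrt (\<lambda>a b. ?f a \<ge> ?f b) p" using fu fv by (simp add: p_def)
  qed
  moreover have "card X \<ge> t - 1" using cardS[of bA] X_def by (simp add: card_Diff_singleton_if)
  then have "length p \<ge> 2*t+1" using Ap Bp cardS by (simp add: p_def)
  ultimately show ?thesis by auto
qed

lemma caseNN: assumes uA: "\<not> isA u" and vA: "\<not> isA v"
  shows "\<exists>p. degree_monotone_path N E1 p \<and> 2*t+1 \<le> length p"
proof -
  define bv where "bv = v div t"
  define bu where "bu = u div t"
  define bA where "bA = bv - bv mod 3"
  have bv: "bv < 3*m" "bv mod 3 \<noteq> 0" using vN vA unfolding bv_def lessN isA_def by auto
  have bu: "bu < 3*m" "bu mod 3 \<noteq> 0" using uN uA unfolding bu_def lessN isA_def by auto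
  have "bA = 3*(bv div 3) + 0" unfolding bA_def using dec3[of bv] by (metis add_diff_cancel_right' add_0_right)
  then have bA23: "bA div 3 = bv div 3" "bA mod 3 = 0" using divmod3[of 0 "bv div 3"] by simp_all
  then have bA: "bA < 3*m" "bA div 3 = bv div 3" "bA mod 3 = 0" using div3_lt bv(1) by blast+
  have ndiv: "bu \<noteq> bv" using nadj uv unfolding adj_def bu_def bv_def by auto
  define av where "av = pt bA v"
  have pav: "adj v av" "av < N" "av \<in> S bA" using pt_adj[OF vN] bA bv vA unfolding av_def bv_def by auto
  have uS: "u \<in> S bu" by (simp add: S_iff bu_def)
  define A where "A = endl (S bA) av"
  note Ap = endl[OF finS pav(3), folded A_def]
  define B where "B = startl (S bu) u"
  note Bp = startl[OF finS uS, folded B_def]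
  have hdB: "hd B = u" unfolding B_def startl_def by simp
  have disj: "S bA \<inter> S bu = {}" using S_iff bA(3) bu(2) by auto
  have vnot: "v \<notin> S bA" "v \<notin> S bu" using isA_S bA vA S_iff ndiv unfolding bv_def by auto
  have unot: "u \<notin> S bA" using isA_S bA uA by auto
  let ?f = "deg E1"
  have fv: "?f v = t + 1" using deg1[OF vN] vA by simp
  have fu: "?f u = t + 1" using deg1[OF uN] uA by simp
  have fA: "\<forall>x\<in>S bA. ?f x = t + 1"
  proof
    fix x assume x: "x \<in> S bA"
    then have "x < N" "isA x" "x \<noteq> v" "x \<noteq> u" using S_sub[OF bA(1)] isA_S bA vnot unot by auto
    then show "?f x = t + 1" using deg1 by simp
  qed
  have fB: "\<forall>x\<in>S bu - {u}. ?f x = t"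
  proof
    fix x assume x: "x \<in> S bu - {u}"
    then have "x < N" "\<not> isA x" "x \<noteq> v" "x \<noteq> u" using S_sub[OF bu(1)] isA_S bu vnot by auto
    then show "?f x = t" using deg1 by simp
  qed
  define p where "p = A @ v # B"
  have "degree_monotone_path N E1 p"
  proof (rule dmp_intro)
    show "p \<noteq> []" by (simp add: p_def)
    show "distinct p" using Ap Bp vnot disj by (simp add: p_def)
    show "set p \<subseteq> {0..<N}" using Ap Bp vN S_sub[OF bA(1)] S_sub[OF bu(1)] by (auto simp: p_def)
    have "successively (\<lambda>a b. {a,b} \<in> E1) A" using clique Ap bA by blast
    moreover have "successively (\<lambda>a b. {a,b} \<in> E1) B" using clique Bp bu by blast
    moreover have "{av, v} \<in> E1" using adjE1 vN pav adj_sym by blast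
    ultimately show "successively (\<lambda>a b. {a,b} \<in> E1) p"
      using uvE1 hdB Ap Bp by (simp add: p_def successively_append_iff successively_Cons)
    have sA: "sorted_wrt (\<lambda>a b. ?f a \<ge> ?f b) A" using sorted_const[of A ?f "t+1"] Ap fA by auto
    have sB: "sorted_wrt (\<lambda>a b. ?f a \<ge> ?f b) B"
      unfolding B_def using fB fu by (intro sorted_startl[where c="t"]) (auto simp: finS)
    have "\<forall>x\<in>set B. ?f v \<ge> ?f x"
    proof
      fix x assume "x \<in> set B" then show "?f v \<ge> ?f x" using Bp fB fu fv by (cases "x = u") auto
    qed
    then have "sorted_wrt (\<lambda>a b. ?f a \<ge> ?f b) (v # B)" using sB by simp
    moreover have "\<forall>a\<in>set A. \<forall>b\<in>set (v # B). ?f a \<ge> ?f b"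
    proof (intro ballI)
      fix a b assume "a \<in> set A" "b \<in> set (v # B)"
      then show "?f a \<ge> ?f b" using Ap Bp fA fB fu fv by (cases "b = u") auto
    qed
    ultimately show "sorted_wrt (\<lambda>a b. ?f a \<ge> ?f b) p" using sA by (simp add: p_def sorted_wrt_append)
  qed
  moreover have "length p = 2*t+1" using Ap Bp cardS by (simp add: p_def)
  ultimately show ?thesis by auto
qed

end



context C begin

lemma Dint: "u < N \<Longrightarrow> v < N \<Longrightarrow> u \<noteq> v \<Longrightarrow> \<not> adj u v \<Longrightarrow> D t m u v"
  unfolding D_def D_axioms_def C_def using tpos mpos by auto

lemma sat: assumes "u < N" "v < N" "u \<noteq> v" "{u,v} \<notin> E0"
  shows "2*t+1 \<le> mp N (insert {u,v} E0)"
proof -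
  have na: "\<not> adj u v" "\<not> adj v u" using assms memE0 adj_sym by blast+
  have "\<exists>p. degree_monotone_path N (insert {u,v} E0) p \<and> 2*t+1 \<le> length p"
  proof (cases "isA u")
    case uA: True
    show ?thesis
    proof (cases "isA v")
      case True then show ?thesis using D.caseAA[OF Dint[OF assms(1-3) na(1)] uA] unfolding D.E1_def[OF Dint[OF assms(1-3) na(1)]] by blast
    next
      case False then show ?thesis using D.caseAN[OF Dint[OF assms(1-3) na(1)] uA] unfolding D.E1_def[OF Dint[OF assms(1-3) na(1)]] by blast
    qed
  next
    case uN: False
    show ?thesis
    proof (cases "isA v")
      case True
      have dd: "D t m v u" using Dint assms na by auto
      have "insert {v,u} E0 = insert {u,v} E0" by (simp add: insert_commute)
      then show ?thesis using D.caseAN[OF dd True uN] unfolding D.E1_def[OF dd] by simp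
    next
      case False then show ?thesis using D.caseNN[OF Dint[OF assms(1-3) na(1)] uN] unfolding D.E1_def[OF Dint[OF assms(1-3) na(1)]] by blast
    qed
  qed
  then show ?thesis using mp_ge by (meson le_trans)
qed

lemma card_isA: "card {w. w < N \<and> isA w} = t*m"
proof -
  let ?g = "\<lambda>(j,i). t*(3*j) + i"
  have "{w. w < N \<and> isA w} = ?g ` ({..<m} \<times> {..<t})"
  proof (rule set_eqI, rule iffI)
    fix w assume w: "w \<in> {w. w < N \<and> isA w}"
    then have "w div t < 3*m" "w div t mod 3 = 0" using lessN isA_def by auto
    then have "w div t div 3 < m" "w div t = 3 * (w div t div 3)"
      by (simp_all add: div_less_iff_less_mult mult.commute) (metis add.right_neutral div_mult_mod_eq mult.commute)
    moreover have "w = t * (w div t) + w mod t" by simp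
    moreover have "w mod t < t" using tpos by simp
    ultimately have "w = ?g (w div t div 3, w mod t)" "(w div t div 3, w mod t) \<in> {..<m} \<times> {..<t}"
      by simp_all
    then show "w \<in> ?g ` ({..<m} \<times> {..<t})" by blast
  next
    fix w assume "w \<in> ?g ` ({..<m} \<times> {..<t})"
    then obtain j i where ji: "j < m" "i < t" "w = t*(3*j) + i" by auto
    then have "w div t = 3*j" by simp
    then show "w \<in> {w. w < N \<and> isA w}" using ji lessN isA_def by simp
  qed
  moreover have "inj_on ?g ({..<m} \<times> {..<t})"
  proof (rule inj_onI)
    fix a b assume a: "a \<in> {..<m} \<times> {..<t}" and b: "b \<in> {..<m} \<times> {..<t}" and e: "?g a = ?g b"
    obtain j i where aa: "a = (j,i)" by force
    obtain j' i' where bb: "b = (j',i')" by force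
    have "(t*(3*j) + i) div t = 3*j" "(t*(3*j') + i') div t = 3*j'"
      "(t*(3*j) + i) mod t = i" "(t*(3*j') + i') mod t = i'" using a b aa bb by auto
    then show "a = b" using e aa bb by (metis case_prod_conv mult_left_cancel zero_neq_numeral)
  qed
  ultimately show ?thesis by (simp add: card_image)
qed

lemma sum_deg: "(\<Sum>w<N. deg E0 w) = N*t + t*m"
proof -
  have "(\<Sum>w<N. deg E0 w) = (\<Sum>w<N. t + (if isA w then 1 else 0))" using deg0 by simp
  also have "\<dots> = N*t + (\<Sum>w<N. (if isA w then 1 else 0))" by (simp add: sum.distrib)
  also have "(\<Sum>w<N. (if isA w then 1 else 0)) = card {w. w < N \<and> isA w}"
    by (simp add: sum.If_cases lessThan_def Collect_conj_eq)
  finally show ?thesis using card_isA by simp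
qed

lemma handshake: "2 * card E0 \<le> (\<Sum>w<N. deg E0 w)"
proof -
  define P where "P = Sigma {..<N} (\<lambda>w. {x. {x,w} \<in> E0})"
  have Pm: "(w,x) \<in> P \<longleftrightarrow> w < N \<and> x < N \<and> adj x w" for w x
    unfolding P_def using memE0 by auto
  have finB: "finite {x. {x,w} \<in> E0}" for w
    by (rule finite_subset[of _ "{0..<N}"]) (use memE0 in auto)
  have cP: "card P = (\<Sum>w<N. deg E0 w)" unfolding P_def deg_def using finB by (simp add: card_SigmaI)
  have finP: "finite P" unfolding P_def using finB by simp
  define P1 where "P1 = {z\<in>P. fst z < snd z}"
  define P2 where "P2 = {z\<in>P. snd z < fst z}"
  have "P2 = (\<lambda>(a,b). (b,a)) ` P1"
  proof (rule set_eqI)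
    fix z show "z \<in> P2 \<longleftrightarrow> z \<in> (\<lambda>(a,b). (b,a)) ` P1"
      unfolding P1_def P2_def using Pm adj_sym by (cases z) (auto simp: image_iff)
  qed
  moreover have "inj_on (\<lambda>(a,b). (b,a)) P1" by (auto simp: inj_on_def)
  ultimately have c12: "card P2 = card P1" by (simp add: card_image)
  have "P1 \<union> P2 \<subseteq> P" "P1 \<inter> P2 = {}" unfolding P1_def P2_def by auto
  then have c3: "card P1 + card P2 \<le> card P"
    by (metis card_Un_disjoint card_mono finP finite_subset sup.boundedE)
  have sub: "E0 \<subseteq> (\<lambda>(w,x). {x,w}) ` P1"
  proof
    fix e assume "e \<in> E0"
    then obtain a b where ab: "e = {a,b}" "a < N" "b < N" "adj a b" unfolding E0_def by blast
    then have "a \<noteq> b" unfolding adj_def by blast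
    show "e \<in> (\<lambda>(w,x). {x,w}) ` P1"
    proof (cases "a < b")
      case True
      have "adj b a" using ab(4) adj_sym by blast
      then have "(a,b) \<in> P1" unfolding P1_def using Pm[of a b] ab True by simp
      moreover have "e = (\<lambda>(w,x). {x,w}) (a,b)" using ab by (simp add: insert_commute)
      ultimately show ?thesis by (rule rev_image_eqI)
    next
      case False
      then have "b < a" using \<open>a \<noteq> b\<close> by simp
      then have "(b,a) \<in> P1" unfolding P1_def using Pm[of b a] ab by simp
      moreover have "e = (\<lambda>(w,x). {x,w}) (b,a)" using ab by simp
      ultimately show ?thesis by (rule rev_image_eqI)
    qed
  qed
  have fP1: "finite P1" using finP unfolding P1_def by simp
  have "card E0 \<le> card P1"
    using card_mono[OF finite_imageI[OF fP1] sub] card_image_le[OF fP1] le_trans by blast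
  then show ?thesis using cP c12 c3 by linarith
qed

lemma cardE0: "12 * card E0 \<le> N * (6*t + 2)"
proof -
  have eq: "N * (6*t + 2) = 6 * (N*t + t*m)" by (simp add: N_def algebra_simps)
  have a: "2 * card E0 \<le> N*t + t*m" using handshake sum_deg by simp
  have "6 * (2 * card E0) \<le> 6 * (N*t + t*m)" using a by (rule mult_le_mono2)
  then have "12 * card E0 \<le> 6 * (N*t + t*m)" by simp
  then show ?thesis unfolding eq .
qed

lemma ksat: "k_saturated (2*t+1) N E0"
  unfolding k_saturated_def using simple mp0 sat by simp

end

lemma h_le: assumes "k_saturated k n E" shows "h n k \<le> card E"
proof -
  have "{card E | E. k_saturated k n E} \<subseteq> card ` Pow (Pow {0..<n})"
    unfolding k_saturated_def simple_graph_def by auto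
  then have "finite {card E | E. k_saturated k n E}" by (rule finite_subset) simp
  then show ?thesis unfolding h_def using assms by (intro Min_le) auto
qed

theorem theorem2p5:
  fixes k n :: nat
  assumes "k \<ge> 3" and "odd k" and "n > 0" and "(3 * (k - 1) div 2) dvd n"
  shows "12 * h n k \<le> n * (3 * k - 1)"
proof -
  define t where "t = (k - 1) div 2"
  have o: "2*(k div 2) + 1 = k" using assms(2) by (rule odd_two_times_div_two_succ)
  then have "k - 1 = 2*(k div 2)" by linarith
  then have "t = k div 2" unfolding t_def by simp
  then have k: "k = 2*t+1" "t > 0" using o assms(1) by linarith+
  have "3 * (k - 1) div 2 = 3*t" using k by simp
  then obtain m where m: "n = 3*t*m" using assms(4) by (auto elim!: dvdE)
  then have "m > 0" using assms(3) by (cases m) auto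
  interpret C t m using k \<open>m > 0\<close> by unfold_locales auto
  have "h n k \<le> card E0" using h_le ksat m k unfolding N_def by simp
  then have "12 * h n k \<le> 12 * card E0" by simp
  also have "\<dots> \<le> N * (6*t+2)" by (rule cardE0)
  also have "\<dots> = n * (3 * k - 1)" using m k unfolding N_def by simp
  finally show ?thesis .
qed


end
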